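(* Let $S$ be a finite $p$-group and $\mathcal{A}$ a divisible $S$-algebra. Then $\mathcal{A}$ has all twisted units if and only if, for all isomorphisms $\varphi:P\to Q$ and $\psi:Q\to R$ of $\mathfrak{F}_S(\mathcal{A})$, every element of $\mathcal{A}(\psi\varphi)$ is of the form $xy$ with $x\in\mathcal{A}(\psi)$ and $y\in\mathcal{A}(\varphi)$ (i.e. the multiplication pairing $\mathcal{A}(\psi)\times\mathcal{A}(\varphi)\to\mathcal{A}(\psi\varphi)$ is surjective).
   Context: $\mathcal{O}$ is a complete local noetherian domain with maximal ideal $\mathfrak{m}$ and algebraically closed residue field of characteristic $p$. An interior $S$-algebra is an $\mathcal{O}$-free finite-rank $\mathcal{O}$-algebra $\mathcal{A}$ with group homomorphism $S\to\mathcal{A}^\times$; $S\times S$ acts by $(s,t)a=sat^{-1}$; it is bifree if it has an $\mathcal{O}$-basis $Y$ with $sY=Y=Ys$ ($s\in S$) on which left and right actions are free. For $P\le S$ and injective $\varphi:P\to S$, ${}^\varphi\mathcal{A}^P=\{a:\varphi(p)a=ap\ \forall p\}$ is the fixed points of $\Delta(\varphi,P)=\{(\varphi(p),p)\}$, and $\mathcal{A}(\varphi)=\mathcal{A}^{\Delta}/(\mathfrak{m}\mathcal{A}^\Delta+\sum_{V<\Delta}\mathrm{tr}_V^\Delta\mathcal{A}^V)$ with $\Delta=\Delta(\varphi,P)$ and quotient map $\mathrm{br}_\varphi$; $\mathcal{A}(P)=\mathcal{A}(\iota_P)$. Multiplication induces $\mathcal{A}(\psi)\times\mathcal{A}(\varphi)\to\mathcal{A}(\psi\varphi)$,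 $\mathrm{br}_\psi(a)\mathrm{br}_\varphi(c)=\mathrm{br}_{\psi\varphi}(ac)$. $\mathfrak{F}_S(\mathcal{A})$: objects subgroups of $S$, $\mathrm{Hom}(P,Q)=\{\varphi:P\to Q$ injective$:\mathcal{A}(\varphi)\ne0\}$. $\mathcal{A}$ is divisible if it is bifree and $\mathfrak{F}_S(\mathcal{A})$ contains all inclusions, is closed under composition, and every morphism is an inclusion composed with an isomorphism of $\mathfrak{F}_S(\mathcal{A})$. For an isomorphism $\varphi:P\to Q$ of $\mathfrak{F}_S(\mathcal{A})$, a twisted unit of $\varphi$ is $u\in\mathcal{A}(\varphi)$ such that some $u^\dagger\in\mathcal{A}(\varphi^{-1})$ satisfies $u^\dagger u=1_{\mathcal{A}(P)}$; $\mathcal{A}$ has all twisted units if every isomorphism of $\mathfrak{F}_S(\mathcal{A})$ has a twisted unit. *)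

theory Defs
  imports "HOL-Algebra.Algebra"
begin

definition ideal_power :: "('o, 'b) ring_scheme \<Rightarrow> 'o set \<Rightarrow> nat \<Rightarrow> 'o set" where
  "ideal_power R m n = ((\<lambda>J. ideal_prod R m J) ^^ n) (carrier R)"

definition madic_complete :: "('o, 'b) ring_scheme \<Rightarrow> 'o set \<Rightarrow> bool" where
  "madic_complete R m \<longleftrightarrow>
     (\<forall>x :: nat \<Rightarrow> 'o. range x \<subseteq> carrier R \<and>
        (\<forall>k. \<exists>N. \<forall>i\<ge>N. \<forall>j\<ge>N. x i \<ominus>\<^bsub>R\<^esub> x j \<in> ideal_power R m k)
        \<longrightarrow> (\<exists>l\<in>carrier R. \<forall>k. \<exists>N. \<forall>i\<ge>N. x i \<ominus>\<^bsub>R\<^esub> l \<in> ideal_power R m k))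
   \<and> (\<Inter>k. ideal_power R m k) = {\<zero>\<^bsub>R\<^esub>}"

definition standing_ring :: "('o, 'b) ring_scheme \<Rightarrow> 'o set \<Rightarrow> nat \<Rightarrow> bool" where
  "standing_ring R m p \<longleftrightarrow>
     noetherian_domain R \<and> maximalideal m R \<and> (\<forall>I. maximalideal I R \<longrightarrow> I = m)
     \<and> madic_complete R m
     \<and> algebraically_closed (R Quot m)
     \<and> Factorial_Ring.prime p \<and> add_pow (R Quot m) p \<one>\<^bsub>R Quot m\<^esub> = \<zero>\<^bsub>R Quot m\<^esub>"

definition p_group :: "('g, 'c) monoid_scheme \<Rightarrow> nat \<Rightarrow> bool" where
  "p_group G p \<longleftrightarrow> group G \<and> finite (carrier G) \<and> (\<exists>n. card (carrier G) = p ^ n)"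

definition free_basis ::
  "('o, 'b) ring_scheme \<Rightarrow> ('a, 'd) ring_scheme \<Rightarrow> ('o \<Rightarrow> 'a) \<Rightarrow> 'a set \<Rightarrow> bool" where
  "free_basis R A alg Y \<longleftrightarrow> finite Y \<and> Y \<subseteq> carrier A \<and>
     (\<forall>a\<in>carrier A. \<exists>f\<in>Y \<rightarrow> carrier R. a = finsum A (\<lambda>y. alg (f y) \<otimes>\<^bsub>A\<^esub> y) Y) \<and>
     (\<forall>f\<in>Y \<rightarrow> carrier R. finsum A (\<lambda>y. alg (f y) \<otimes>\<^bsub>A\<^esub> y) Y = \<zero>\<^bsub>A\<^esub>
         \<longrightarrow> (\<forall>y\<in>Y. f y = \<zero>\<^bsub>R\<^esub>))"

definition interior_algebra ::
  "('o, 'b) ring_scheme \<Rightarrow> ('a, 'd) ring_scheme \<Rightarrow> ('o \<Rightarrow> 'a)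
   \<Rightarrow> ('g, 'c) monoid_scheme \<Rightarrow> ('g \<Rightarrow> 'a) \<Rightarrow> bool" where
  "interior_algebra R A alg G \<sigma> \<longleftrightarrow>
     ring A \<and> alg \<in> ring_hom R A \<and>
     (\<forall>c\<in>carrier R. \<forall>a\<in>carrier A. alg c \<otimes>\<^bsub>A\<^esub> a = a \<otimes>\<^bsub>A\<^esub> alg c) \<and>
     (\<exists>Y. free_basis R A alg Y) \<and>
     group G \<and> \<sigma> \<in> hom G (units_of A)"

definition bifree ::
  "('o, 'b) ring_scheme \<Rightarrow> ('a, 'd) ring_scheme \<Rightarrow> ('o \<Rightarrow> 'a)
   \<Rightarrow> ('g, 'c) monoid_scheme \<Rightarrow> ('g \<Rightarrow> 'a) \<Rightarrow> bool" where
  "bifree R A alg G \<sigma> \<longleftrightarrow> interior_algebra R A alg G \<sigma> \<and>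
     (\<exists>Y. free_basis R A alg Y \<and>
        (\<forall>s\<in>carrier G. (\<lambda>y. \<sigma> s \<otimes>\<^bsub>A\<^esub> y) ` Y = Y \<and> (\<lambda>y. y \<otimes>\<^bsub>A\<^esub> \<sigma> s) ` Y = Y) \<and>
        (\<forall>s\<in>carrier G. \<forall>y\<in>Y. \<sigma> s \<otimes>\<^bsub>A\<^esub> y = y \<longrightarrow> s = \<one>\<^bsub>G\<^esub>) \<and>
        (\<forall>s\<in>carrier G. \<forall>y\<in>Y. y \<otimes>\<^bsub>A\<^esub> \<sigma> s = y \<longrightarrow> s = \<one>\<^bsub>G\<^esub>))"

definition act :: "('a, 'd) ring_scheme \<Rightarrow> ('g, 'c) monoid_scheme \<Rightarrow> ('g \<Rightarrow> 'a)
   \<Rightarrow> 'g \<times> 'g \<Rightarrow> 'a \<Rightarrow> 'a" where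
  "act A G \<sigma> st a = \<sigma> (fst st) \<otimes>\<^bsub>A\<^esub> a \<otimes>\<^bsub>A\<^esub> \<sigma> (inv\<^bsub>G\<^esub> (snd st))"

definition Delta :: "('g \<Rightarrow> 'g) \<Rightarrow> 'g set \<Rightarrow> ('g \<times> 'g) set" where
  "Delta \<phi> P = {(\<phi> x, x) | x. x \<in> P}"

definition fixpts :: "('a, 'd) ring_scheme \<Rightarrow> ('g, 'c) monoid_scheme \<Rightarrow> ('g \<Rightarrow> 'a)
   \<Rightarrow> ('g \<times> 'g) set \<Rightarrow> 'a set" where
  "fixpts A G \<sigma> V = {a \<in> carrier A. \<forall>g\<in>V. act A G \<sigma> g a = a}"

text \<open>Relative trace tr_V^D(a) = sum over the left cosets gV of V in D of g a
  (independent of the choice of representatives for a in A^V).\<close>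
definition trace :: "('a, 'd) ring_scheme \<Rightarrow> ('g, 'c) monoid_scheme \<Rightarrow> ('g \<Rightarrow> 'a)
   \<Rightarrow> ('g \<times> 'g) set \<Rightarrow> ('g \<times> 'g) set \<Rightarrow> 'a \<Rightarrow> 'a" where
  "trace A G \<sigma> D V a =
     finsum A (\<lambda>C. act A G \<sigma> (SOME g. g \<in> C) a) {l_coset (G \<times>\<times> G) g V | g. g \<in> D}"

text \<open>The kernel of the Brauer map br_D : A^D \<rightarrow> A(D), i.e. the submodule
  m A^D + sum_{V < D} tr_V^D(A^V).\<close>
inductive_set brker :: "'o set \<Rightarrow> ('a, 'd) ring_scheme \<Rightarrow> ('o \<Rightarrow> 'a)
   \<Rightarrow> ('g, 'c) monoid_scheme \<Rightarrow> ('g \<Rightarrow> 'a) \<Rightarrow> ('g \<times> 'g) set \<Rightarrow> 'a set"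
  for m A alg G \<sigma> D where
  zero: "\<zero>\<^bsub>A\<^esub> \<in> brker m A alg G \<sigma> D"
| mgen: "c \<in> m \<Longrightarrow> a \<in> fixpts A G \<sigma> D \<Longrightarrow> alg c \<otimes>\<^bsub>A\<^esub> a \<in> brker m A alg G \<sigma> D"
| trgen: "subgroup V (G \<times>\<times> G) \<Longrightarrow> V \<subset> D \<Longrightarrow> a \<in> fixpts A G \<sigma> V
           \<Longrightarrow> trace A G \<sigma> D V a \<in> brker m A alg G \<sigma> D"
| add: "x \<in> brker m A alg G \<sigma> D \<Longrightarrow> y \<in> brker m A alg G \<sigma> D
           \<Longrightarrow> x \<oplus>\<^bsub>A\<^esub> y \<in> brker m A alg G \<sigma> D"
| neg: "x \<in> brker m A alg G \<sigma> D \<Longrightarrow> \<ominus>\<^bsub>A\<^esub> x \<in> brker m A alg G \<sigma> D"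

text \<open>A(phi) \<noteq> 0 for phi : P \<rightarrow> S.\<close>
definition brauer_nonzero :: "'o set \<Rightarrow> ('a, 'd) ring_scheme \<Rightarrow> ('o \<Rightarrow> 'a)
   \<Rightarrow> ('g, 'c) monoid_scheme \<Rightarrow> ('g \<Rightarrow> 'a) \<Rightarrow> ('g \<Rightarrow> 'g) \<Rightarrow> 'g set \<Rightarrow> bool" where
  "brauer_nonzero m A alg G \<sigma> \<phi> P \<longleftrightarrow>
     \<not> fixpts A G \<sigma> (Delta \<phi> P) \<subseteq> brker m A alg G \<sigma> (Delta \<phi> P)"

definition F_hom :: "'o set \<Rightarrow> ('a, 'd) ring_scheme \<Rightarrow> ('o \<Rightarrow> 'a)
   \<Rightarrow> ('g, 'c) monoid_scheme \<Rightarrow> ('g \<Rightarrow> 'a) \<Rightarrow> 'g set \<Rightarrow> 'g set \<Rightarrow> ('g \<Rightarrow> 'g) \<Rightarrow> bool" where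
  "F_hom m A alg G \<sigma> P Q \<phi> \<longleftrightarrow>
     subgroup P G \<and> subgroup Q G \<and>
     \<phi> \<in> hom (G\<lparr>carrier := P\<rparr>) (G\<lparr>carrier := Q\<rparr>) \<and> inj_on \<phi> P \<and>
     brauer_nonzero m A alg G \<sigma> \<phi> P"

definition F_iso :: "'o set \<Rightarrow> ('a, 'd) ring_scheme \<Rightarrow> ('o \<Rightarrow> 'a)
   \<Rightarrow> ('g, 'c) monoid_scheme \<Rightarrow> ('g \<Rightarrow> 'a) \<Rightarrow> 'g set \<Rightarrow> 'g set \<Rightarrow> ('g \<Rightarrow> 'g) \<Rightarrow> bool" where
  "F_iso m A alg G \<sigma> P Q \<phi> \<longleftrightarrow>
     F_hom m A alg G \<sigma> P Q \<phi> \<and>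
     (\<exists>\<chi>. F_hom m A alg G \<sigma> Q P \<chi> \<and> (\<forall>x\<in>P. \<chi> (\<phi> x) = x) \<and> (\<forall>y\<in>Q. \<phi> (\<chi> y) = y))"

definition divisible ::
  "('o, 'b) ring_scheme \<Rightarrow> 'o set \<Rightarrow> ('a, 'd) ring_scheme \<Rightarrow> ('o \<Rightarrow> 'a)
   \<Rightarrow> ('g, 'c) monoid_scheme \<Rightarrow> ('g \<Rightarrow> 'a) \<Rightarrow> bool" where
  "divisible R m A alg G \<sigma> \<longleftrightarrow>
     bifree R A alg G \<sigma> \<and>
     (\<forall>P Q. subgroup P G \<and> subgroup Q G \<and> P \<subseteq> Q \<longrightarrow> F_hom m A alg G \<sigma> P Q (\<lambda>x. x)) \<and>
     (\<forall>P Q T \<phi> \<psi>. F_hom m A alg G \<sigma> P Q \<phi> \<and> F_hom m A alg G \<sigma> Q T \<psi>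
          \<longrightarrow> F_hom m A alg G \<sigma> P T (\<psi> \<circ> \<phi>)) \<and>
     (\<forall>P Q \<phi>. F_hom m A alg G \<sigma> P Q \<phi> \<longrightarrow>
          (\<exists>P' \<alpha>. F_iso m A alg G \<sigma> P P' \<alpha> \<and> P' \<subseteq> Q \<and> (\<forall>x\<in>P. \<phi> x = \<alpha> x)))"

text \<open>u (a representative in A^Delta(phi,P)) is a twisted unit of the isomorphism
  phi : P \<rightarrow> Q: some u' in A(phi^-1) has u' u = 1 in A(P).\<close>
definition twisted_unit :: "'o set \<Rightarrow> ('a, 'd) ring_scheme \<Rightarrow> ('o \<Rightarrow> 'a)
   \<Rightarrow> ('g, 'c) monoid_scheme \<Rightarrow> ('g \<Rightarrow> 'a) \<Rightarrow> 'g set \<Rightarrow> 'g set \<Rightarrow> ('g \<Rightarrow> 'g) \<Rightarrow> 'a \<Rightarrow> bool" where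
  "twisted_unit m A alg G \<sigma> P Q \<phi> u \<longleftrightarrow>
     u \<in> fixpts A G \<sigma> (Delta \<phi> P) \<and>
     (\<exists>u' \<in> fixpts A G \<sigma> (Delta (inv_into P \<phi>) Q).
        u' \<otimes>\<^bsub>A\<^esub> u \<ominus>\<^bsub>A\<^esub> \<one>\<^bsub>A\<^esub> \<in> brker m A alg G \<sigma> (Delta (\<lambda>x. x) P))"

definition all_twisted_units :: "'o set \<Rightarrow> ('a, 'd) ring_scheme \<Rightarrow> ('o \<Rightarrow> 'a)
   \<Rightarrow> ('g, 'c) monoid_scheme \<Rightarrow> ('g \<Rightarrow> 'a) \<Rightarrow> bool" where
  "all_twisted_units m A alg G \<sigma> \<longleftrightarrow>
     (\<forall>P Q \<phi>. F_iso m A alg G \<sigma> P Q \<phi> \<longrightarrow> (\<exists>u. twisted_unit m A alg G \<sigma> P Q \<phi> u))"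

end

theory Submission imports Defs begin

locale setting =
  fixes A :: "('a, 'd) ring_scheme" and G :: "('g, 'c) monoid_scheme" and \<sigma> :: "'g \<Rightarrow> 'a"
  assumes rA: "ring A" and gG: "group G" and hs: "\<sigma> \<in> hom G (units_of A)"
begin

sublocale R: ring A by (rule rA)
sublocale H: group G by (rule gG)

lemma sig_units: "s \<in> carrier G \<Longrightarrow> \<sigma> s \<in> Units A"
  using hs by (auto simp: hom_def units_of_carrier)

lemma sig_carr [simp]: "s \<in> carrier G \<Longrightarrow> \<sigma> s \<in> carrier A"
  using sig_units by blast

lemma sig_mult: "s \<in> carrier G \<Longrightarrow> t \<in> carrier G \<Longrightarrow> \<sigma> (s \<otimes>\<^bsub>G\<^esub> t) = \<sigma> s \<otimes>\<^bsub>A\<^esub> \<sigma> t"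
  using hs by (auto simp: hom_def units_of_mult)

lemma gh: "group_hom G (units_of A) \<sigma>"
  unfolding group_hom_def group_hom_axioms_def using gG R.units_group hs by blast

lemma sig_one: "\<sigma> \<one>\<^bsub>G\<^esub> = \<one>\<^bsub>A\<^esub>"
  using group_hom.hom_one[OF gh] by (simp add: units_of_one)

lemma sig_inv_l: "s \<in> carrier G \<Longrightarrow> \<sigma> (inv\<^bsub>G\<^esub> s) \<otimes>\<^bsub>A\<^esub> \<sigma> s = \<one>\<^bsub>A\<^esub>"
  by (metis H.l_inv H.inv_closed sig_mult sig_one)

lemma sig_inv_r: "s \<in> carrier G \<Longrightarrow> \<sigma> s \<otimes>\<^bsub>A\<^esub> \<sigma> (inv\<^bsub>G\<^esub> s) = \<one>\<^bsub>A\<^esub>"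
  by (metis H.r_inv H.inv_closed sig_mult sig_one)

lemma act_comp:
  assumes "s \<in> carrier G" "t \<in> carrier G" "s' \<in> carrier G" "t' \<in> carrier G" "a \<in> carrier A"
  shows "act A G \<sigma> (s \<otimes>\<^bsub>G\<^esub> s', t \<otimes>\<^bsub>G\<^esub> t') a = act A G \<sigma> (s, t) (act A G \<sigma> (s', t') a)"
  using assms by (simp add: act_def sig_mult H.inv_mult_group R.m_assoc)

lemma act_carr [simp]: "s \<in> carrier G \<Longrightarrow> t \<in> carrier G \<Longrightarrow> a \<in> carrier A \<Longrightarrow> act A G \<sigma> (s, t) a \<in> carrier A"
  by (simp add: act_def)

lemma key:
  assumes "s \<in> carrier G" "t \<in> carrier G" "u \<in> carrier G" "a \<in> carrier A" "z \<in> carrier A"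
    and fz: "act A G \<sigma> (s, t) z = z"
  shows "act A G \<sigma> (s, u) (z \<otimes>\<^bsub>A\<^esub> a) = z \<otimes>\<^bsub>A\<^esub> act A G \<sigma> (t, u) a"
proof -
  have "z \<otimes>\<^bsub>A\<^esub> act A G \<sigma> (t, u) a = (\<sigma> s \<otimes>\<^bsub>A\<^esub> z \<otimes>\<^bsub>A\<^esub> \<sigma> (inv\<^bsub>G\<^esub> t)) \<otimes>\<^bsub>A\<^esub> (\<sigma> t \<otimes>\<^bsub>A\<^esub> a \<otimes>\<^bsub>A\<^esub> \<sigma> (inv\<^bsub>G\<^esub> u))"
    using fz by (simp add: act_def)
  also have "\<dots> = \<sigma> s \<otimes>\<^bsub>A\<^esub> z \<otimes>\<^bsub>A\<^esub> (\<sigma> (inv\<^bsub>G\<^esub> t) \<otimes>\<^bsub>A\<^esub> \<sigma> t) \<otimes>\<^bsub>A\<^esub> a \<otimes>\<^bsub>A\<^esub> \<sigma> (inv\<^bsub>G\<^esub> u)"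
    using assms by (simp add: R.m_assoc)
  also have "\<dots> = act A G \<sigma> (s, u) (z \<otimes>\<^bsub>A\<^esub> a)"
    using assms by (simp add: sig_inv_l act_def R.m_assoc)
  finally show ?thesis by simp
qed


definition Fm :: "('g \<Rightarrow> 'g) \<Rightarrow> 'g \<times> 'g \<Rightarrow> 'g \<times> 'g" where
  "Fm f g = (f (snd g), snd g)"

context
  fixes P f z m alg
  assumes sub: "subgroup P G" and fin: "finite (carrier G)"
    and fP: "\<And>x. x \<in> P \<Longrightarrow> f x \<in> carrier G"
    and fm: "\<And>x y. x \<in> P \<Longrightarrow> y \<in> P \<Longrightarrow> f (x \<otimes>\<^bsub>G\<^esub> y) = f x \<otimes>\<^bsub>G\<^esub> f y"
    and zfix: "z \<in> fixpts A G \<sigma> (Delta f P)"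
    and algc: "\<And>c. c \<in> m \<Longrightarrow> alg c \<in> carrier A \<and> (\<forall>a\<in>carrier A. alg c \<otimes>\<^bsub>A\<^esub> a = a \<otimes>\<^bsub>A\<^esub> alg c)"
begin

lemma PG: "x \<in> P \<Longrightarrow> x \<in> carrier G"
  by (rule subgroup.mem_carrier[OF sub])

lemma zc: "z \<in> carrier A" using zfix by (simp add: fixpts_def)

lemma f_one: "f \<one>\<^bsub>G\<^esub> = \<one>\<^bsub>G\<^esub>"
proof -
  have o: "\<one>\<^bsub>G\<^esub> \<in> P" by (rule subgroup.one_closed[OF sub])
  have "f \<one>\<^bsub>G\<^esub> = f \<one>\<^bsub>G\<^esub> \<otimes>\<^bsub>G\<^esub> f \<one>\<^bsub>G\<^esub>" using fm[OF o o] by simp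
  then show ?thesis using fP[OF o] by simp
qed

lemma f_inv: "x \<in> P \<Longrightarrow> f (inv\<^bsub>G\<^esub> x) = inv\<^bsub>G\<^esub> (f x)"
proof -
  assume x: "x \<in> P"
  have ix: "inv\<^bsub>G\<^esub> x \<in> P" by (rule subgroup.m_inv_closed[OF sub x])
  have "f (inv\<^bsub>G\<^esub> x) \<otimes>\<^bsub>G\<^esub> f x = \<one>\<^bsub>G\<^esub>"
    using fm[OF ix x] x PG f_one by simp
  then show ?thesis using H.inv_equality fP x ix by metis
qed

lemma DeltaI: "x \<in> Delta (\<lambda>x. x) P \<longleftrightarrow> (\<exists>q\<in>P. x = (q, q))"
  by (auto simp: Delta_def)

lemma Delta_img: "Fm f ` Delta (\<lambda>x. x) P = Delta f P"
  by (auto simp: Delta_def Fm_def image_def)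

lemma inj_Fm: "inj_on (Fm f) (Delta (\<lambda>x. x) P)"
  by (auto simp: inj_on_def Delta_def Fm_def)

lemma fix_mult:
  assumes V: "V \<subseteq> Delta (\<lambda>x. x) P" and a: "a \<in> fixpts A G \<sigma> V"
  shows "z \<otimes>\<^bsub>A\<^esub> a \<in> fixpts A G \<sigma> (Fm f ` V)"
proof -
  have ac: "a \<in> carrier A" using a by (simp add: fixpts_def)
  have "act A G \<sigma> g (z \<otimes>\<^bsub>A\<^esub> a) = z \<otimes>\<^bsub>A\<^esub> a" if g: "g \<in> Fm f ` V" for g
  proof -
    obtain v where v: "v \<in> V" and gv: "g = Fm f v" using g by blast
    obtain q where q: "q \<in> P" and vq: "v = (q, q)" using v V DeltaI by blast
    have fz: "act A G \<sigma> (f q, q) z = z" using zfix q by (auto simp: fixpts_def Delta_def)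
    have "act A G \<sigma> (f q, q) (z \<otimes>\<^bsub>A\<^esub> a) = z \<otimes>\<^bsub>A\<^esub> act A G \<sigma> (q, q) a"
      using key[OF fP[OF q] PG[OF q] PG[OF q] ac zc fz] .
    also have "\<dots> = z \<otimes>\<^bsub>A\<^esub> a" using a v vq by (simp add: fixpts_def)
    finally show ?thesis using gv vq by (simp add: Fm_def)
  qed
  then show ?thesis using ac zc by (simp add: fixpts_def)
qed

lemma coset_facts:
  assumes g: "g \<in> Delta (\<lambda>x. x) P" and sV: "subgroup V (G \<times>\<times> G)"
    and V: "V \<subseteq> Delta (\<lambda>x. x) P" and a: "a \<in> fixpts A G \<sigma> V"
  shows "g \<in> l_coset (G \<times>\<times> G) g V"
    and "c \<in> l_coset (G \<times>\<times> G) g V \<Longrightarrow> c \<in> Delta (\<lambda>x. x) P \<and> act A G \<sigma> c a = act A G \<sigma> g a"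
proof -
  obtain p where p: "p \<in> P" and gp: "g = (p, p)" using g DeltaI by blast
  have "(\<one>\<^bsub>G\<^esub>, \<one>\<^bsub>G\<^esub>) \<in> V" using sV subgroup.one_closed by fastforce
  then show "g \<in> l_coset (G \<times>\<times> G) g V"
    using gp PG[OF p] unfolding l_coset_def by force
  assume "c \<in> l_coset (G \<times>\<times> G) g V"
  then obtain v where v: "v \<in> V" and cv: "c = g \<otimes>\<^bsub>G \<times>\<times> G\<^esub> v" unfolding l_coset_def by blast
  obtain q where q: "q \<in> P" and vq: "v = (q, q)" using v V DeltaI by blast
  have c: "c = (p \<otimes>\<^bsub>G\<^esub> q, p \<otimes>\<^bsub>G\<^esub> q)" using cv gp vq by simp
  have "p \<otimes>\<^bsub>G\<^esub> q \<in> P" by (rule subgroup.m_closed[OF sub p q])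
  moreover have "act A G \<sigma> c a = act A G \<sigma> g a"
  proof -
    have ac: "a \<in> carrier A" using a by (simp add: fixpts_def)
    have "act A G \<sigma> c a = act A G \<sigma> (p, p) (act A G \<sigma> (q, q) a)"
      using c act_comp PG p q ac by simp
    also have "\<dots> = act A G \<sigma> g a" using a v vq gp by (simp add: fixpts_def)
    finally show ?thesis .
  qed
  ultimately show "c \<in> Delta (\<lambda>x. x) P \<and> act A G \<sigma> c a = act A G \<sigma> g a"
    using c DeltaI by blast
qed

lemma fin_D: "finite (Delta (\<lambda>x. x) P)"
proof -
  have "Delta (\<lambda>x. x) P \<subseteq> carrier G \<times> carrier G" using PG by (auto simp: Delta_def)
  then show ?thesis using fin finite_subset by blast
qed

lemma coset_img:
  assumes g: "g \<in> Delta (\<lambda>x. x) P" and V: "V \<subseteq> Delta (\<lambda>x. x) P"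
  shows "Fm f ` l_coset (G \<times>\<times> G) g V = l_coset (G \<times>\<times> G) (Fm f g) (Fm f ` V)"
proof -
  obtain p where p: "p \<in> P" and gp: "g = (p, p)" using g DeltaI by blast
  have "Fm f (g \<otimes>\<^bsub>G \<times>\<times> G\<^esub> v) = Fm f g \<otimes>\<^bsub>G \<times>\<times> G\<^esub> Fm f v" if v: "v \<in> V" for v
  proof -
    obtain q where q: "q \<in> P" and vq: "v = (q, q)" using v V DeltaI by blast
    show ?thesis using gp vq fm[OF p q] by (simp add: Fm_def)
  qed
  then have e: "(\<Union>v\<in>V. {Fm f (g \<otimes>\<^bsub>G \<times>\<times> G\<^esub> v)}) = (\<Union>v\<in>V. {Fm f g \<otimes>\<^bsub>G \<times>\<times> G\<^esub> Fm f v})"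
    by (intro SUP_cong) simp_all
  show ?thesis by (simp add: l_coset_def image_UN e)
qed

lemma sub_img:
  assumes sV: "subgroup V (G \<times>\<times> G)" and V: "V \<subseteq> Delta (\<lambda>x. x) P"
  shows "subgroup (Fm f ` V) (G \<times>\<times> G)"
proof -
  have gp: "group (G \<times>\<times> G)" by (rule DirProd_group[OF gG gG])
  show ?thesis
  proof (rule group.subgroupI[OF gp])
    show "Fm f ` V \<subseteq> carrier (G \<times>\<times> G)"
      using V PG fP by (auto simp: Fm_def Delta_def)
    have "(\<one>\<^bsub>G\<^esub>, \<one>\<^bsub>G\<^esub>) \<in> V" using subgroup.one_closed[OF sV] by simp
    then show "Fm f ` V \<noteq> {}" by blast
  next
    fix x assume x: "x \<in> Fm f ` V"
    then obtain v where v: "v \<in> V" and xv: "x = Fm f v" by blast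
    obtain q where q: "q \<in> P" and vq: "v = (q, q)" using v V DeltaI by blast
    have "inv\<^bsub>G \<times>\<times> G\<^esub> v \<in> V" using subgroup.m_inv_closed[OF sV v] .
    then have iv: "(inv\<^bsub>G\<^esub> q, inv\<^bsub>G\<^esub> q) \<in> V" using vq PG[OF q] gG by simp
    have "inv\<^bsub>G \<times>\<times> G\<^esub> x = Fm f (inv\<^bsub>G\<^esub> q, inv\<^bsub>G\<^esub> q)"
      using xv vq PG[OF q] fP[OF q] gG f_inv[OF q] by (simp add: Fm_def)
    then show "inv\<^bsub>G \<times>\<times> G\<^esub> x \<in> Fm f ` V" using iv by blast
  next
    fix x y assume x: "x \<in> Fm f ` V" and y: "y \<in> Fm f ` V"
    then obtain v w where v: "v \<in> V" and xv: "x = Fm f v" and w: "w \<in> V" and yw: "y = Fm f w" by blast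
    obtain q where q: "q \<in> P" and vq: "v = (q, q)" using v V DeltaI by blast
    obtain r where r: "r \<in> P" and wr: "w = (r, r)" using w V DeltaI by blast
    have "v \<otimes>\<^bsub>G \<times>\<times> G\<^esub> w \<in> V" using subgroup.m_closed[OF sV v w] .
    then have vw: "(q \<otimes>\<^bsub>G\<^esub> r, q \<otimes>\<^bsub>G\<^esub> r) \<in> V" using vq wr by simp
    have "x \<otimes>\<^bsub>G \<times>\<times> G\<^esub> y = Fm f (q \<otimes>\<^bsub>G\<^esub> r, q \<otimes>\<^bsub>G\<^esub> r)"
      using xv yw vq wr fm[OF q r] by (simp add: Fm_def)
    then show "x \<otimes>\<^bsub>G \<times>\<times> G\<^esub> y \<in> Fm f ` V" using vw by blast
  qed
qed

lemma trace_mult: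
  assumes sV: "subgroup V (G \<times>\<times> G)" and V: "V \<subseteq> Delta (\<lambda>x. x) P"
    and a: "a \<in> fixpts A G \<sigma> V"
  shows "z \<otimes>\<^bsub>A\<^esub> trace A G \<sigma> (Delta (\<lambda>x. x) P) V a
       = trace A G \<sigma> (Delta f P) (Fm f ` V) (z \<otimes>\<^bsub>A\<^esub> a)"
    and "trace A G \<sigma> (Delta (\<lambda>x. x) P) V a \<in> carrier A"
proof -
  define D where "D = Delta (\<lambda>x. x) P"
  define Cs where "Cs = {l_coset (G \<times>\<times> G) g V | g. g \<in> D}"
  define h where "h = (\<lambda>C. act A G \<sigma> (SOME g. g \<in> C) a)"
  define h' where "h' = (\<lambda>C. act A G \<sigma> (SOME g. g \<in> C) (z \<otimes>\<^bsub>A\<^esub> a))"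
  have ac: "a \<in> carrier A" using a by (simp add: fixpts_def)
  have VD: "V \<subseteq> D" using V D_def by simp
  have Cs_img: "Cs = (\<lambda>g. l_coset (G \<times>\<times> G) g V) ` D" unfolding Cs_def by blast
  have finCs: "finite Cs" using Cs_img fin_D D_def by simp
  have actg: "\<And>g. g \<in> D \<Longrightarrow> act A G \<sigma> g a \<in> carrier A"
    using PG ac by (auto simp: D_def Delta_def)
  have hC: "h C = act A G \<sigma> g a" if "g \<in> D" "C = l_coset (G \<times>\<times> G) g V" for g C
  proof -
    have "g \<in> C" using coset_facts(1)[OF _ sV V a] that D_def by simp
    then have "(SOME g. g \<in> C) \<in> C" by (rule someI)
    then show ?thesis unfolding h_def using coset_facts(2)[OF _ sV V a] that D_def by simp
  qed
  have zact: "z \<otimes>\<^bsub>A\<^esub> act A G \<sigma> c a = act A G \<sigma> (Fm f c) (z \<otimes>\<^bsub>A\<^esub> a)" if c: "c \<in> D" for c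
  proof -
    obtain q where q: "q \<in> P" and cq: "c = (q, q)" using c D_def DeltaI by blast
    have fz: "act A G \<sigma> (f q, q) z = z" using zfix q by (auto simp: fixpts_def Delta_def)
    show ?thesis using key[OF fP[OF q] PG[OF q] PG[OF q] ac zc fz] cq by (simp add: Fm_def)
  qed
  have h'C: "h' (Fm f ` C) = z \<otimes>\<^bsub>A\<^esub> act A G \<sigma> g a" if "g \<in> D" "C = l_coset (G \<times>\<times> G) g V" for g C
  proof -
    have "g \<in> C" using coset_facts(1)[OF _ sV V a] that D_def by simp
    then have "Fm f g \<in> Fm f ` C" by blast
    then have "(SOME g. g \<in> Fm f ` C) \<in> Fm f ` C" by (rule someI)
    then obtain c where c: "c \<in> C" and sc: "(SOME g. g \<in> Fm f ` C) = Fm f c" by blast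
    have cD: "c \<in> D" and eq: "act A G \<sigma> c a = act A G \<sigma> g a"
      using coset_facts(2)[OF _ sV V a] that D_def c by auto
    show ?thesis unfolding h'_def sc using zact[OF cD] eq by simp
  qed
  have hcar: "h \<in> Cs \<rightarrow> carrier A"
    using hC actg unfolding Cs_def by auto
  show tc: "trace A G \<sigma> (Delta (\<lambda>x. x) P) V a \<in> carrier A"
    unfolding trace_def D_def[symmetric] Cs_def[symmetric] h_def[symmetric]
    using hcar by (rule R.finsum_closed)
  have Cs': "{l_coset (G \<times>\<times> G) g (Fm f ` V) | g. g \<in> Delta f P} = (\<lambda>C. Fm f ` C) ` Cs"
  proof -
    have "{l_coset (G \<times>\<times> G) g (Fm f ` V) | g. g \<in> Delta f P}
        = (\<lambda>g. l_coset (G \<times>\<times> G) g (Fm f ` V)) ` (Fm f ` D)"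
      using Delta_img D_def by blast
    also have "\<dots> = (\<lambda>g. Fm f ` l_coset (G \<times>\<times> G) g V) ` D"
      using coset_img[OF _ V] D_def by (auto simp: image_image)
    also have "\<dots> = (\<lambda>C. Fm f ` C) ` Cs" using Cs_img by (simp add: image_image)
    finally show ?thesis .
  qed
  have CsD: "C \<subseteq> D" if "C \<in> Cs" for C
    using that coset_facts(2)[OF _ sV V a] unfolding Cs_def D_def by blast
  have inj: "inj_on (\<lambda>C. Fm f ` C) Cs"
    unfolding inj_on_def using CsD inj_Fm inj_on_image_eq_iff D_def by metis
  have h'car: "h' \<in> (\<lambda>C. Fm f ` C) ` Cs \<rightarrow> carrier A"
    using h'C actg zc unfolding Cs_def by auto
  have "z \<otimes>\<^bsub>A\<^esub> finsum A h Cs = finsum A (\<lambda>C. z \<otimes>\<^bsub>A\<^esub> h C) Cs"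
    by (rule R.finsum_rdistr[OF finCs zc hcar])
  also have "\<dots> = finsum A (\<lambda>C. h' (Fm f ` C)) Cs"
  proof (rule R.finsum_cong')
    show "(\<lambda>C. h' (Fm f ` C)) \<in> Cs \<rightarrow> carrier A" using h'car by auto
    fix C assume "C \<in> Cs"
    then obtain g where "g \<in> D" "C = l_coset (G \<times>\<times> G) g V" unfolding Cs_def by blast
    then show "z \<otimes>\<^bsub>A\<^esub> h C = h' (Fm f ` C)" using hC h'C by simp
  qed simp
  also have "\<dots> = finsum A h' ((\<lambda>C. Fm f ` C) ` Cs)"
    by (rule R.finsum_reindex[OF h'car inj, symmetric])
  finally show "z \<otimes>\<^bsub>A\<^esub> trace A G \<sigma> (Delta (\<lambda>x. x) P) V a
       = trace A G \<sigma> (Delta f P) (Fm f ` V) (z \<otimes>\<^bsub>A\<^esub> a)"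
    unfolding trace_def D_def[symmetric] Cs_def[symmetric] h_def[symmetric] Cs' h'_def[symmetric] .
qed

lemma brker_carr: "x \<in> brker m A alg G \<sigma> (Delta (\<lambda>x. x) P) \<Longrightarrow> x \<in> carrier A"
proof (induction rule: brker.induct)
  case zero then show ?case by simp
next
  case (mgen c a) then show ?case using algc by (simp add: fixpts_def)
next
  case (trgen V a) then show ?case using trace_mult(2)[of V a] by blast
next
  case (add x y) then show ?case by simp
next
  case (neg x) then show ?case by simp
qed

lemma brker_mult: "x \<in> brker m A alg G \<sigma> (Delta (\<lambda>x. x) P) \<Longrightarrow> z \<otimes>\<^bsub>A\<^esub> x \<in> brker m A alg G \<sigma> (Delta f P)"
proof (induction rule: brker.induct)
  case zero then show ?case using zc by (simp add: brker.zero)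
next
  case (mgen c a)
  have ac: "a \<in> carrier A" using mgen by (simp add: fixpts_def)
  have e: "z \<otimes>\<^bsub>A\<^esub> (alg c \<otimes>\<^bsub>A\<^esub> a) = alg c \<otimes>\<^bsub>A\<^esub> (z \<otimes>\<^bsub>A\<^esub> a)"
  proof -
    have "z \<otimes>\<^bsub>A\<^esub> (alg c \<otimes>\<^bsub>A\<^esub> a) = (z \<otimes>\<^bsub>A\<^esub> alg c) \<otimes>\<^bsub>A\<^esub> a"
      using algc[OF mgen(1)] zc ac by (simp add: R.m_assoc)
    also have "\<dots> = (alg c \<otimes>\<^bsub>A\<^esub> z) \<otimes>\<^bsub>A\<^esub> a" using algc[OF mgen(1)] zc by simp
    also have "\<dots> = alg c \<otimes>\<^bsub>A\<^esub> (z \<otimes>\<^bsub>A\<^esub> a)"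
      using algc[OF mgen(1)] zc ac by (simp add: R.m_assoc)
    finally show ?thesis .
  qed
  have "z \<otimes>\<^bsub>A\<^esub> a \<in> fixpts A G \<sigma> (Delta f P)"
    using fix_mult[OF subset_refl mgen(2)] Delta_img by simp
  then show ?case unfolding e by (rule brker.mgen[OF mgen(1)])
next
  case (trgen V a)
  have VD: "V \<subseteq> Delta (\<lambda>x. x) P" using trgen(2) by blast
  have s: "subgroup (Fm f ` V) (G \<times>\<times> G)" by (rule sub_img[OF trgen(1) VD])
  have pr: "Fm f ` V \<subset> Delta f P"
  proof -
    have "Fm f ` V \<subseteq> Fm f ` Delta (\<lambda>x. x) P" using VD by blast
    moreover have "Fm f ` V \<noteq> Fm f ` Delta (\<lambda>x. x) P"
      using inj_on_image_eq_iff[OF inj_Fm VD subset_refl] trgen(2) by blast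
    ultimately show ?thesis using Delta_img by blast
  qed
  have fa: "z \<otimes>\<^bsub>A\<^esub> a \<in> fixpts A G \<sigma> (Fm f ` V)" by (rule fix_mult[OF VD trgen(3)])
  show ?case unfolding trace_mult(1)[OF trgen(1) VD trgen(3)]
    by (rule brker.trgen[OF s pr fa])
next
  case (add x y)
  have "x \<in> carrier A" "y \<in> carrier A" using add brker_carr by blast+
  then have "z \<otimes>\<^bsub>A\<^esub> (x \<oplus>\<^bsub>A\<^esub> y) = z \<otimes>\<^bsub>A\<^esub> x \<oplus>\<^bsub>A\<^esub> z \<otimes>\<^bsub>A\<^esub> y"
    using zc by (simp add: R.r_distr)
  then show ?case using add brker.add by metis
next
  case (neg x)
  have "x \<in> carrier A" using neg brker_carr by blast
  then have "z \<otimes>\<^bsub>A\<^esub> (\<ominus>\<^bsub>A\<^esub> x) = \<ominus>\<^bsub>A\<^esub> (z \<otimes>\<^bsub>A\<^esub> x)"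
    using zc by (simp add: R.r_minus)
  then show ?case using neg brker.neg by metis
qed

end

end

lemma (in ring) diff_lem: "z \<in> carrier R \<Longrightarrow> w \<in> carrier R \<Longrightarrow> \<ominus> (z \<otimes> (w \<ominus> \<one>)) = z \<ominus> z \<otimes> w"
  by (simp add: a_minus_def r_distr r_minus minus_add a_comm)

lemma (in ring) neg_diff: "a \<in> carrier R \<Longrightarrow> b \<in> carrier R \<Longrightarrow> \<ominus> (a \<ominus> b) = b \<ominus> a"
  by (simp add: a_minus_def minus_add a_comm)

lemma m_sub: "maximalideal m R \<Longrightarrow> m \<subseteq> carrier R"
  using maximalideal.axioms(1) ideal.axioms(1) additive_subgroup.a_subset by metis

lemma F_hom_carr:
  assumes "F_hom m A alg G \<sigma> P Q \<phi>" "x \<in> P"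
  shows "\<phi> x \<in> Q" "x \<in> carrier G" "\<phi> x \<in> carrier G"
proof -
  have h: "\<phi> \<in> hom (G\<lparr>carrier := P\<rparr>) (G\<lparr>carrier := Q\<rparr>)" "subgroup P G" "subgroup Q G"
    using assms(1) by (auto simp: F_hom_def)
  show q: "\<phi> x \<in> Q" using h(1) assms(2) by (auto simp: hom_def)
  show "x \<in> carrier G" using subgroup.mem_carrier[OF h(2) assms(2)] .
  show "\<phi> x \<in> carrier G" using subgroup.mem_carrier[OF h(3) q] .
qed

lemma F_hom_mult:
  assumes "F_hom m A alg G \<sigma> P Q \<phi>" "x \<in> P" "y \<in> P"
  shows "\<phi> (x \<otimes>\<^bsub>G\<^esub> y) = \<phi> x \<otimes>\<^bsub>G\<^esub> \<phi> y"
  using assms by (auto simp: F_hom_def hom_def)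

lemma F_hom_sub: "F_hom m A alg G \<sigma> P Q \<phi> \<Longrightarrow> subgroup P G"
  by (simp add: F_hom_def)

lemma F_hom_inj: "F_hom m A alg G \<sigma> P Q \<phi> \<Longrightarrow> inj_on \<phi> P"
  by (simp add: F_hom_def)


theorem proposition5p2:
  fixes R :: "('o, 'b) ring_scheme" and m :: "'o set" and p :: nat
    and A :: "('a, 'd) ring_scheme" and alg :: "'o \<Rightarrow> 'a"
    and G :: "('g, 'c) monoid_scheme" and \<sigma> :: "'g \<Rightarrow> 'a"
  assumes "standing_ring R m p"
    and "p_group G p"
    and "divisible R m A alg G \<sigma>"
  shows "all_twisted_units m A alg G \<sigma> \<longleftrightarrow>
    (\<forall>P Q T \<phi> \<psi>. F_iso m A alg G \<sigma> P Q \<phi> \<and> F_iso m A alg G \<sigma> Q T \<psi> \<longrightarrow>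
       (\<forall>z \<in> fixpts A G \<sigma> (Delta (\<psi> \<circ> \<phi>) P).
          \<exists>x \<in> fixpts A G \<sigma> (Delta \<psi> Q). \<exists>y \<in> fixpts A G \<sigma> (Delta \<phi> P).
            z \<ominus>\<^bsub>A\<^esub> (x \<otimes>\<^bsub>A\<^esub> y) \<in> brker m A alg G \<sigma> (Delta (\<psi> \<circ> \<phi>) P)))"
proof -
  have ia: "interior_algebra R A alg G \<sigma>"
    using assms(3) by (simp add: divisible_def bifree_def)
  then have st: "setting A G \<sigma>"
    by (simp add: interior_algebra_def setting_def)
  interpret S: setting A G \<sigma> by (rule st)
  have fin: "finite (carrier G)" using assms(2) by (simp add: p_group_def)
  have msub: "m \<subseteq> carrier R" using m_sub assms(1) unfolding standing_ring_def by blast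
  have algc: "alg c \<in> carrier A \<and> (\<forall>a\<in>carrier A. alg c \<otimes>\<^bsub>A\<^esub> a = a \<otimes>\<^bsub>A\<^esub> alg c)" if "c \<in> m" for c
  proof -
    have ih: "alg \<in> ring_hom R A" using ia by (simp add: interior_algebra_def)
    have cen: "\<forall>c\<in>carrier R. \<forall>a\<in>carrier A. alg c \<otimes>\<^bsub>A\<^esub> a = a \<otimes>\<^bsub>A\<^esub> alg c"
      using ia by (simp add: interior_algebra_def)
    have cR: "c \<in> carrier R" using msub that by blast
    show ?thesis using ring_hom_closed[OF ih cR] cen cR by blast
  qed
  show ?thesis
  proof
    assume atu: "all_twisted_units m A alg G \<sigma>"
    show "\<forall>P Q T \<phi> \<psi>. F_iso m A alg G \<sigma> P Q \<phi> \<and> F_iso m A alg G \<sigma> Q T \<psi> \<longrightarrow>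
       (\<forall>z \<in> fixpts A G \<sigma> (Delta (\<psi> \<circ> \<phi>) P).
          \<exists>x \<in> fixpts A G \<sigma> (Delta \<psi> Q). \<exists>y \<in> fixpts A G \<sigma> (Delta \<phi> P).
            z \<ominus>\<^bsub>A\<^esub> (x \<otimes>\<^bsub>A\<^esub> y) \<in> brker m A alg G \<sigma> (Delta (\<psi> \<circ> \<phi>) P))"
    proof (intro allI impI ballI, elim conjE)
      fix P Q T \<phi> \<psi> z
      assume i1: "F_iso m A alg G \<sigma> P Q \<phi>" and i2: "F_iso m A alg G \<sigma> Q T \<psi>"
        and zf: "z \<in> fixpts A G \<sigma> (Delta (\<psi> \<circ> \<phi>) P)"
      have h1: "F_hom m A alg G \<sigma> P Q \<phi>" using i1 by (simp add: F_iso_def)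
      have h2: "F_hom m A alg G \<sigma> Q T \<psi>" using i2 by (simp add: F_iso_def)
      obtain \<chi> where hc: "F_hom m A alg G \<sigma> Q P \<chi>" and c1: "\<forall>x\<in>P. \<chi> (\<phi> x) = x"
        and c2: "\<forall>y\<in>Q. \<phi> (\<chi> y) = y" using i1 by (auto simp: F_iso_def)
      obtain u where tu: "twisted_unit m A alg G \<sigma> P Q \<phi> u"
        using atu i1 unfolding all_twisted_units_def by blast
      then obtain u' where uf: "u \<in> fixpts A G \<sigma> (Delta \<phi> P)"
        and u'f: "u' \<in> fixpts A G \<sigma> (Delta (inv_into P \<phi>) Q)"
        and uu: "u' \<otimes>\<^bsub>A\<^esub> u \<ominus>\<^bsub>A\<^esub> \<one>\<^bsub>A\<^esub> \<in> brker m A alg G \<sigma> (Delta (\<lambda>x. x) P)"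
        by (auto simp: twisted_unit_def)
      have zc: "z \<in> carrier A" using zf by (simp add: fixpts_def)
      have uc: "u \<in> carrier A" using uf by (simp add: fixpts_def)
      have u'c: "u' \<in> carrier A" using u'f by (simp add: fixpts_def)
      have xf: "z \<otimes>\<^bsub>A\<^esub> u' \<in> fixpts A G \<sigma> (Delta \<psi> Q)"
      proof -
        have "act A G \<sigma> g (z \<otimes>\<^bsub>A\<^esub> u') = z \<otimes>\<^bsub>A\<^esub> u'" if g: "g \<in> Delta \<psi> Q" for g
        proof -
          obtain q where q: "q \<in> Q" and gq: "g = (\<psi> q, q)" using g by (auto simp: Delta_def)
          define pp where "pp = \<chi> q"
          have pp: "pp \<in> P" using F_hom_carr(1)[OF hc q] pp_def by simp
          have qpp: "\<phi> pp = q" using c2 q pp_def by simp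
          have ipp: "inv_into P \<phi> q = pp" using inv_into_f_eq[OF F_hom_inj[OF h1] pp qpp] .
          have fu': "act A G \<sigma> (pp, q) u' = u'"
            using u'f q ipp by (force simp: fixpts_def Delta_def)
          have fz: "act A G \<sigma> (\<psi> q, pp) z = z"
            using zf pp qpp by (force simp: fixpts_def Delta_def)
          have "act A G \<sigma> (\<psi> q, q) (z \<otimes>\<^bsub>A\<^esub> u') = z \<otimes>\<^bsub>A\<^esub> act A G \<sigma> (pp, q) u'"
            by (rule S.key[OF F_hom_carr(3)[OF h2 q] F_hom_carr(2)[OF h1 pp]
                  F_hom_carr(2)[OF h2 q] u'c zc fz])
          then show ?thesis using fu' gq by simp
        qed
        then show ?thesis using zc u'c by (simp add: fixpts_def)
      qed
      have bm: "z \<otimes>\<^bsub>A\<^esub> (u' \<otimes>\<^bsub>A\<^esub> u \<ominus>\<^bsub>A\<^esub> \<one>\<^bsub>A\<^esub>) \<in> brker m A alg G \<sigma> (Delta (\<psi> \<circ> \<phi>) P)"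
      proof (rule S.brker_mult[OF F_hom_sub[OF h1] fin _ _ zf algc uu])
        fix x assume x: "x \<in> P"
        show "(\<psi> \<circ> \<phi>) x \<in> carrier G" using F_hom_carr(3)[OF h2 F_hom_carr(1)[OF h1 x]] by simp
      next
        fix x y assume x: "x \<in> P" and y: "y \<in> P"
        show "(\<psi> \<circ> \<phi>) (x \<otimes>\<^bsub>G\<^esub> y) = (\<psi> \<circ> \<phi>) x \<otimes>\<^bsub>G\<^esub> (\<psi> \<circ> \<phi>) y"
          using F_hom_mult[OF h1 x y] F_hom_mult[OF h2 F_hom_carr(1)[OF h1 x] F_hom_carr(1)[OF h1 y]]
          by simp
      qed simp
      have "\<ominus>\<^bsub>A\<^esub> (z \<otimes>\<^bsub>A\<^esub> (u' \<otimes>\<^bsub>A\<^esub> u \<ominus>\<^bsub>A\<^esub> \<one>\<^bsub>A\<^esub>)) = z \<ominus>\<^bsub>A\<^esub> ((z \<otimes>\<^bsub>A\<^esub> u') \<otimes>\<^bsub>A\<^esub> u)"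
        using S.R.diff_lem[OF zc S.R.m_closed[OF u'c uc]] zc uc u'c by (simp add: S.R.m_assoc)
      then have "z \<ominus>\<^bsub>A\<^esub> ((z \<otimes>\<^bsub>A\<^esub> u') \<otimes>\<^bsub>A\<^esub> u) \<in> brker m A alg G \<sigma> (Delta (\<psi> \<circ> \<phi>) P)"
        using brker.neg[OF bm] by simp
      then show "\<exists>x \<in> fixpts A G \<sigma> (Delta \<psi> Q). \<exists>y \<in> fixpts A G \<sigma> (Delta \<phi> P).
            z \<ominus>\<^bsub>A\<^esub> (x \<otimes>\<^bsub>A\<^esub> y) \<in> brker m A alg G \<sigma> (Delta (\<psi> \<circ> \<phi>) P)"
        using xf uf by blast
    qed
  next
    assume surj: "\<forall>P Q T \<phi> \<psi>. F_iso m A alg G \<sigma> P Q \<phi> \<and> F_iso m A alg G \<sigma> Q T \<psi> \<longrightarrow>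
       (\<forall>z \<in> fixpts A G \<sigma> (Delta (\<psi> \<circ> \<phi>) P).
          \<exists>x \<in> fixpts A G \<sigma> (Delta \<psi> Q). \<exists>y \<in> fixpts A G \<sigma> (Delta \<phi> P).
            z \<ominus>\<^bsub>A\<^esub> (x \<otimes>\<^bsub>A\<^esub> y) \<in> brker m A alg G \<sigma> (Delta (\<psi> \<circ> \<phi>) P))"
    show "all_twisted_units m A alg G \<sigma>"
      unfolding all_twisted_units_def
    proof (intro allI impI)
      fix P Q \<phi> assume i1: "F_iso m A alg G \<sigma> P Q \<phi>"
      have h1: "F_hom m A alg G \<sigma> P Q \<phi>" using i1 by (simp add: F_iso_def)
      obtain \<chi> where hc: "F_hom m A alg G \<sigma> Q P \<chi>" and c1: "\<forall>x\<in>P. \<chi> (\<phi> x) = x"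
        and c2: "\<forall>y\<in>Q. \<phi> (\<chi> y) = y" using i1 by (auto simp: F_iso_def)
      have i2: "F_iso m A alg G \<sigma> Q P \<chi>"
        unfolding F_iso_def using hc h1 c1 c2 by blast
      have D1: "Delta (\<chi> \<circ> \<phi>) P = Delta (\<lambda>x. x) P"
        using c1 by (force simp: Delta_def)
      have D2: "Delta (inv_into P \<phi>) Q = Delta \<chi> Q"
      proof -
        have "inv_into P \<phi> q = \<chi> q" if q: "q \<in> Q" for q
          using inv_into_f_eq[OF F_hom_inj[OF h1] F_hom_carr(1)[OF hc q]] c2 q by simp
        then show ?thesis by (force simp: Delta_def)
      qed
      have one: "\<one>\<^bsub>A\<^esub> \<in> fixpts A G \<sigma> (Delta (\<chi> \<circ> \<phi>) P)"
      proof -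
        have "act A G \<sigma> g \<one>\<^bsub>A\<^esub> = \<one>\<^bsub>A\<^esub>" if g: "g \<in> Delta (\<lambda>x. x) P" for g
        proof -
          obtain x where x: "x \<in> P" and gx: "g = (x, x)" using g by (auto simp: Delta_def)
          show ?thesis using gx S.sig_inv_r[OF F_hom_carr(2)[OF h1 x]] F_hom_carr(2)[OF h1 x]
            by (simp add: act_def)
        qed
        then show ?thesis unfolding D1 by (simp add: fixpts_def)
      qed
      obtain x y where xf: "x \<in> fixpts A G \<sigma> (Delta \<chi> Q)" and yf: "y \<in> fixpts A G \<sigma> (Delta \<phi> P)"
        and b: "\<one>\<^bsub>A\<^esub> \<ominus>\<^bsub>A\<^esub> (x \<otimes>\<^bsub>A\<^esub> y) \<in> brker m A alg G \<sigma> (Delta (\<chi> \<circ> \<phi>) P)"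
        using surj i1 i2 one by blast
      have xc: "x \<in> carrier A" using xf by (simp add: fixpts_def)
      have yc: "y \<in> carrier A" using yf by (simp add: fixpts_def)
      have "x \<otimes>\<^bsub>A\<^esub> y \<ominus>\<^bsub>A\<^esub> \<one>\<^bsub>A\<^esub> \<in> brker m A alg G \<sigma> (Delta (\<lambda>x. x) P)"
        using brker.neg[OF b] S.R.neg_diff[OF S.R.one_closed S.R.m_closed[OF xc yc]] D1 by simp
      then have "twisted_unit m A alg G \<sigma> P Q \<phi> y"
        unfolding twisted_unit_def D2 using xf yf by blast
      then show "\<exists>u. twisted_unit m A alg G \<sigma> P Q \<phi> u" by blast
    qed
  qed
qed

end
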